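(* Let $e\to H\to G\xrightarrow{q} K\to e$ be a short exact sequence of groups with $H\subset FCH(G)$ (i.e. $G$ is an FC-hypercentral extension of $K$). Then $G$ is FC-hypercentral if and only if $K$ is FC-hypercentral.
   Context: The FC-center $FC(G)$ is the subgroup of elements of $G$ with finite conjugacy class. The upper FC-central series $(F_\alpha)_\alpha$, indexed by ordinals, is defined by $F_0=\{e\}$, $F_{\beta+1}/F_\beta=FC(G/F_\beta)$, and $F_\alpha=\bigcup_{\beta<\alpha}F_\beta$ for limit ordinals $\alpha$. The FC-hypercenter is $FCH(G)=\bigcup_\alpha F_\alpha$, and $G$ is FC-hypercentral if $FCH(G)=G$. *)

theory Defs
  imports "HOL-Algebra.Algebra"
begin

definition FC_center :: "('a, 'b) monoid_scheme \<Rightarrow> 'a set" where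
  "FC_center G = {g \<in> carrier G.
     finite {h \<otimes>\<^bsub>G\<^esub> g \<otimes>\<^bsub>G\<^esub> inv\<^bsub>G\<^esub> h | h. h \<in> carrier G}}"

definition FC_succ :: "('a, 'b) monoid_scheme \<Rightarrow> 'a set \<Rightarrow> 'a set" where
  "FC_succ G N = {g \<in> carrier G. N #>\<^bsub>G\<^esub> g \<in> FC_center (G Mod N)}"

text \<open>The terms F_alpha (alpha an ordinal) of the upper FC-central series, described
  without ordinals: the least family containing F_0 = {e}, closed under the successor
  step and under unions of nonempty subfamilies (limit stages).\<close>
inductive_set FC_terms :: "('a, 'b) monoid_scheme \<Rightarrow> 'a set set" for G where
  base: "{\<one>\<^bsub>G\<^esub>} \<in> FC_terms G"
| succ: "N \<in> FC_terms G \<Longrightarrow> FC_succ G N \<in> FC_terms G"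
| lim: "(\<And>N. N \<in> S \<Longrightarrow> N \<in> FC_terms G) \<Longrightarrow> S \<noteq> {} \<Longrightarrow> \<Union>S \<in> FC_terms G"

definition FCH :: "('a, 'b) monoid_scheme \<Rightarrow> 'a set" where
  "FCH G = \<Union>(FC_terms G)"

definition FC_hypercentral :: "('a, 'b) monoid_scheme \<Rightarrow> bool" where
  "FC_hypercentral G \<longleftrightarrow> FCH G = carrier G"

end

theory Submission
  imports Defs
begin


lemma (in normal) rcos_eq_iff:
  assumes "a \<in> carrier G" "b \<in> carrier G"
  shows "(H #> a = H #> b) \<longleftrightarrow> a \<otimes> inv b \<in> H"
proof
  assume "H #> a = H #> b"
  then have "a \<in> H #> b" using rcos_self[OF assms(1) subgroup_axioms] by simp
  then show "a \<otimes> inv b \<in> H" using rcos_module_imp[OF is_group assms(2)] by blast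
next
  assume "a \<otimes> inv b \<in> H"
  then have "a \<in> H #> b" using rcos_module_rev[OF is_group assms(2) assms(1)] by blast
  then show "H #> a = H #> b" using repr_independence[OF _ assms(2) subgroup_axioms] by simp
qed

lemma (in normal) FC_succ_iff:
  assumes "g \<in> carrier G"
  shows "g \<in> FC_succ G H \<longleftrightarrow> finite ((\<lambda>h. H #> (h \<otimes> g \<otimes> inv h)) ` carrier G)"
proof -
  have eq: "{Z <#> (H #> g) <#> inv\<^bsub>G Mod H\<^esub> Z | Z. Z \<in> carrier (G Mod H)}
     = (\<lambda>h. H #> (h \<otimes> g \<otimes> inv h)) ` carrier G"
  proof -
    have "Z <#> (H #> g) <#> inv\<^bsub>G Mod H\<^esub> Z = H #> (h \<otimes> g \<otimes> inv h)"
      if "Z = H #> h" "h \<in> carrier G" for Z h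
    proof -
      have "Z \<in> carrier (G Mod H)" using that by (auto simp: carrier_FactGroup)
      then have "inv\<^bsub>G Mod H\<^esub> Z = H #> inv h" using inv_FactGroup rcos_inv that by simp
      then show ?thesis using that assms by (simp add: rcos_sum)
    qed
    then show ?thesis by (auto simp: carrier_FactGroup)
  qed
  have "H #> g \<in> carrier (G Mod H)" using assms by (auto simp: carrier_FactGroup)
  then show ?thesis using assms unfolding FC_succ_def FC_center_def mult_FactGroup
    by (simp add: eq)
qed

lemma finite_transfer:
  fixes A :: "'x \<Rightarrow> 'y" and B :: "'x \<Rightarrow> 'z" and Dom :: "'x set"
  assumes "finite (A ` Dom)" "\<And>x y. x \<in> Dom \<Longrightarrow> y \<in> Dom \<Longrightarrow> A x = A y \<Longrightarrow> B x = B y"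
  shows "finite (B ` Dom)"
proof -
  have "B ` Dom \<subseteq> (\<lambda>a. B (SOME x. x \<in> Dom \<and> A x = a)) ` (A ` Dom)"
  proof
    fix b assume "b \<in> B ` Dom"
    then obtain x where x: "x \<in> Dom" "b = B x" by auto
    have "\<exists>y. y \<in> Dom \<and> A y = A x" using x by auto
    then have "(SOME y. y \<in> Dom \<and> A y = A x) \<in> Dom \<and> A (SOME y. y \<in> Dom \<and> A y = A x) = A x" by (rule someI_ex)
    then have 1: "b = B (SOME y. y \<in> Dom \<and> A y = A x)" using x assms(2)[of x "SOME y. y \<in> Dom \<and> A y = A x"] by simp
    have "A x \<in> A ` Dom" using x by simp
    moreover note 1
    ultimately show "b \<in> (\<lambda>a. B (SOME x. x \<in> Dom \<and> A x = a)) ` (A ` Dom)" by (rule rev_image_eqI)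
  qed
  then show ?thesis using assms(1) finite_subset by blast
qed

context normal
begin

lemma inv_cancel_left: "h \<in> carrier G \<Longrightarrow> x \<in> carrier G \<Longrightarrow> inv h \<otimes> (h \<otimes> x) = x"
  by (simp add: m_assoc[symmetric])

abbreviation CC where "CC g \<equiv> (\<lambda>h. H #> (h \<otimes> g \<otimes> inv h)) ` carrier G"

lemma FC_succ_carrier: "FC_succ G H \<subseteq> carrier G"
  unfolding FC_succ_def by auto

lemma FC_succ_mem: "g \<in> FC_succ G H \<longleftrightarrow> g \<in> carrier G \<and> finite (CC g)"
proof
  assume 1: "g \<in> FC_succ G H"
  then have 2: "g \<in> carrier G" using FC_succ_carrier by blast
  then show "g \<in> carrier G \<and> finite (CC g)" using FC_succ_iff[OF 2] 1 by simp
next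
  assume "g \<in> carrier G \<and> finite (CC g)"
  then show "g \<in> FC_succ G H" using FC_succ_iff by simp
qed

lemma FC_succ_infl: "H \<subseteq> FC_succ G H"
proof
  fix n assume n: "n \<in> H"
  have nc: "n \<in> carrier G" using n subset by blast
  have "CC n \<subseteq> {H}"
  proof
    fix Z assume "Z \<in> CC n"
    then obtain h where h: "h \<in> carrier G" "Z = H #> (h \<otimes> n \<otimes> inv h)" by auto
    have "h \<otimes> n \<otimes> inv h \<in> H" using inv_op_closed2 h n by blast
    then show "Z \<in> {H}" using h rcos_const[OF is_group] by simp
  qed
  then have "finite (CC n)" by (rule finite_subset) simp
  then show "n \<in> FC_succ G H" using FC_succ_mem nc by simp
qed

lemma CC_mult:
  assumes a: "a \<in> carrier G" and b: "b \<in> carrier G"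
  shows "CC (a \<otimes> b) \<subseteq> (\<lambda>(Z,W). Z <#> W) ` (CC a \<times> CC b)"
proof
  fix Z assume "Z \<in> CC (a \<otimes> b)"
  then obtain h where h: "h \<in> carrier G" "Z = H #> (h \<otimes> (a \<otimes> b) \<otimes> inv h)" by auto
  have "h \<otimes> (a \<otimes> b) \<otimes> inv h = (h \<otimes> a \<otimes> inv h) \<otimes> (h \<otimes> b \<otimes> inv h)"
    using a b h by (simp add: m_assoc inv_cancel_left)
  then have "Z = (H #> (h \<otimes> a \<otimes> inv h)) <#> (H #> (h \<otimes> b \<otimes> inv h))"
    using h a b by (simp add: rcos_sum)
  moreover have "(H #> (h \<otimes> a \<otimes> inv h), H #> (h \<otimes> b \<otimes> inv h)) \<in> CC a \<times> CC b"
    using h by blast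
  ultimately show "Z \<in> (\<lambda>(Z,W). Z <#> W) ` (CC a \<times> CC b)"
    by (simp only: rev_image_eqI case_prod_conv)
qed

lemma CC_inv:
  assumes a: "a \<in> carrier G"
  shows "CC (inv a) \<subseteq> (\<lambda>Z. set_inv Z) ` CC a"
proof
  fix Z assume "Z \<in> CC (inv a)"
  then obtain h where h: "h \<in> carrier G" "Z = H #> (h \<otimes> inv a \<otimes> inv h)" by auto
  have "h \<otimes> inv a \<otimes> inv h = inv (h \<otimes> a \<otimes> inv h)"
    using a h by (simp add: inv_mult_group m_assoc)
  then have "Z = set_inv (H #> (h \<otimes> a \<otimes> inv h))"
    using h a by (simp add: rcos_inv)
  moreover have "H #> (h \<otimes> a \<otimes> inv h) \<in> CC a" using h by blast
  ultimately show "Z \<in> (\<lambda>Z. set_inv Z) ` CC a" by (rule rev_image_eqI[rotated])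
qed

lemma CC_conj:
  assumes a: "a \<in> carrier G" and k: "k \<in> carrier G"
  shows "CC (k \<otimes> a \<otimes> inv k) \<subseteq> CC a"
proof
  fix Z assume "Z \<in> CC (k \<otimes> a \<otimes> inv k)"
  then obtain h where h: "h \<in> carrier G" "Z = H #> (h \<otimes> (k \<otimes> a \<otimes> inv k) \<otimes> inv h)" by auto
  have "h \<otimes> (k \<otimes> a \<otimes> inv k) \<otimes> inv h = (h \<otimes> k) \<otimes> a \<otimes> inv (h \<otimes> k)"
    using a h k by (simp only: inv_mult_group m_assoc inv_closed m_closed)
  then have "Z = H #> ((h \<otimes> k) \<otimes> a \<otimes> inv (h \<otimes> k))" using h by simp
  moreover have "h \<otimes> k \<in> carrier G" using h k by simp
  ultimately show "Z \<in> CC a" by (rule rev_image_eqI[rotated])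
qed

lemma FC_succ_normal: "FC_succ G H \<lhd> G"
proof -
  have sg: "subgroup (FC_succ G H) G"
  proof (rule subgroupI)
    show "FC_succ G H \<subseteq> carrier G" by (rule FC_succ_carrier)
    show "FC_succ G H \<noteq> {}" 
    proof -
      have "\<one> \<in> H" by (rule subgroup.one_closed[OF subgroup_axioms])
      then have "\<one> \<in> FC_succ G H" using FC_succ_infl by blast
      then show ?thesis by blast
    qed
  next
    fix a assume "a \<in> FC_succ G H"
    then have a: "a \<in> carrier G" "finite (CC a)" using FC_succ_mem by auto
    then have "finite ((\<lambda>Z. set_inv Z) ` CC a)" by simp
    then have "finite (CC (inv a))" using CC_inv[OF a(1)] by (rule finite_subset[rotated])
    then show "inv a \<in> FC_succ G H" using FC_succ_mem a by simp
  next
    fix a b assume "a \<in> FC_succ G H" "b \<in> FC_succ G H"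
    then have a: "a \<in> carrier G" "finite (CC a)" "b \<in> carrier G" "finite (CC b)" using FC_succ_mem by auto
    then have "finite ((\<lambda>(Z,W). Z <#> W) ` (CC a \<times> CC b))" by simp
    then have "finite (CC (a \<otimes> b))" using CC_mult[OF a(1) a(3)] by (rule finite_subset[rotated])
    then show "a \<otimes> b \<in> FC_succ G H" using FC_succ_mem a by simp
  qed
  have "\<forall>x\<in>carrier G. \<forall>h\<in>FC_succ G H. x \<otimes> h \<otimes> inv x \<in> FC_succ G H"
  proof (intro ballI)
    fix x h assume x: "x \<in> carrier G" and "h \<in> FC_succ G H"
    then have h: "h \<in> carrier G" "finite (CC h)" using FC_succ_mem by auto
    have "finite (CC (x \<otimes> h \<otimes> inv x))" using CC_conj[OF h(1) x] h(2) by (rule finite_subset)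
    then show "x \<otimes> h \<otimes> inv x \<in> FC_succ G H" using FC_succ_mem x h by simp
  qed
  then show ?thesis using sg normal_inv_iff by blast
qed

end



inductive_set Tn :: "('a, 'b) monoid_scheme \<Rightarrow> 'a set set" for G where
  base: "{\<one>\<^bsub>G\<^esub>} \<in> Tn G"
| succ: "N \<in> Tn G \<Longrightarrow> FC_succ G N \<in> Tn G"
| lim: "(\<And>N. N \<in> SS \<Longrightarrow> N \<in> Tn G) \<Longrightarrow> SS \<noteq> {} \<Longrightarrow> (\<forall>A\<in>SS. \<forall>B\<in>SS. A \<subseteq> B \<or> B \<subseteq> A) \<Longrightarrow> \<Union>SS \<in> Tn G"

lemma (in group) union_chain_normal:
  assumes SS: "\<And>N. N \<in> SS \<Longrightarrow> N \<lhd> G" and ne: "SS \<noteq> {}"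
    and ch: "\<forall>A\<in>SS. \<forall>B\<in>SS. A \<subseteq> B \<or> B \<subseteq> A"
  shows "\<Union>SS \<lhd> G"
proof -
  have sub: "subgroup N G" if "N \<in> SS" for N using SS[OF that] by (rule normal_imp_subgroup)
  have sg: "subgroup (\<Union>SS) G"
  proof (rule subgroupI)
    show "\<Union>SS \<subseteq> carrier G" using sub subgroup.subset by (metis Sup_least)
    obtain N where N: "N \<in> SS" using ne by blast
    have "\<one> \<in> N" by (rule subgroup.one_closed[OF sub[OF N]])
    then show "\<Union>SS \<noteq> {}" using N by blast
  next
    fix a assume "a \<in> \<Union>SS"
    then obtain N where N: "N \<in> SS" "a \<in> N" by blast
    then have "inv a \<in> N" by (rule subgroup.m_inv_closed[OF sub])
    then show "inv a \<in> \<Union>SS" using N by blast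
  next
    fix a b assume "a \<in> \<Union>SS" "b \<in> \<Union>SS"
    then obtain A B where AB: "A \<in> SS" "a \<in> A" "B \<in> SS" "b \<in> B" by blast
    show "a \<otimes> b \<in> \<Union>SS"
    proof (cases "A \<subseteq> B")
      case True
      then have "a \<in> B" using AB by blast
      then have "a \<otimes> b \<in> B" using subgroup.m_closed[OF sub[OF AB(3)]] AB(4) by blast
      then show ?thesis using AB by blast
    next
      case False
      then have "B \<subseteq> A" using ch AB by blast
      then have "b \<in> A" using AB by blast
      then have "a \<otimes> b \<in> A" using subgroup.m_closed[OF sub[OF AB(1)]] AB(2) by blast
      then show ?thesis using AB by blast
    qed
  qed
  have "\<forall>x\<in>carrier G. \<forall>h\<in>\<Union>SS. x \<otimes> h \<otimes> inv x \<in> \<Union>SS"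
  proof (intro ballI)
    fix x h assume x: "x \<in> carrier G" and "h \<in> \<Union>SS"
    then obtain N where N: "N \<in> SS" "h \<in> N" by blast
    have "x \<otimes> h \<otimes> inv x \<in> N" by (rule normal.inv_op_closed2[OF SS[OF N(1)] x N(2)])
    then show "x \<otimes> h \<otimes> inv x \<in> \<Union>SS" using N by blast
  qed
  then show ?thesis using sg normal_inv_iff by blast
qed

lemma Tn_normal:
  assumes G: "group G" and "N \<in> Tn G"
  shows "N \<lhd> G"
  using assms(2)
proof (induction rule: Tn.induct)
  case base
  then show ?case using group.one_is_normal[OF G] by simp
next
  case (succ N)
  then show ?case using normal.FC_succ_normal by blast
next
  case (lim SS)
  then show ?case using group.union_chain_normal[OF G] by blast
qed

lemma Tn_infl: "group G \<Longrightarrow> N \<in> Tn G \<Longrightarrow> N \<subseteq> FC_succ G N"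
  using Tn_normal normal.FC_succ_infl by blast

lemma Tn_Z1:
  assumes G: "group G" and c: "c \<in> Tn G" and hc: "\<forall>x\<in>Tn G. x \<subset> c \<longrightarrow> FC_succ G x \<subseteq> c"
    and x: "x \<in> Tn G"
  shows "x \<subseteq> c \<or> FC_succ G c \<subseteq> x"
  using x
proof (induction rule: Tn.induct)
  case base
  have "c \<lhd> G" using Tn_normal[OF G c] .
  then have "\<one>\<^bsub>G\<^esub> \<in> c" using normal_imp_subgroup subgroup.one_closed by blast
  then show ?case by blast
next
  case (succ y)
  show ?case
  proof (cases "FC_succ G c \<subseteq> y")
    case True
    then show ?thesis using Tn_infl[OF G succ.hyps] by blast
  next
    case False
    then have "y \<subseteq> c" using succ.IH by blast
    then show ?thesis
    proof (cases "y = c")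
      case True then show ?thesis by blast
    next
      case False
      then show ?thesis using hc succ.hyps \<open>y \<subseteq> c\<close> by blast
    qed
  qed
next
  case (lim SS)
  show ?case
  proof (cases "\<forall>s\<in>SS. s \<subseteq> c")
    case True then show ?thesis by blast
  next
    case False
    then obtain s where "s \<in> SS" "\<not> s \<subseteq> c" by blast
    then have "FC_succ G c \<subseteq> s" using lim.IH by blast
    then show ?thesis using \<open>s \<in> SS\<close> by blast
  qed
qed

lemma Tn_Z2:
  assumes G: "group G" and c: "c \<in> Tn G"
  shows "\<forall>x\<in>Tn G. x \<subset> c \<longrightarrow> FC_succ G x \<subseteq> c"
  using c
proof (induction rule: Tn.induct)
  case base
  show ?case
  proof (intro ballI impI)
    fix x assume x: "x \<in> Tn G" "x \<subset> {\<one>\<^bsub>G\<^esub>}"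
    have "x \<lhd> G" using Tn_normal[OF G x(1)] .
    then have "\<one>\<^bsub>G\<^esub> \<in> x" using normal_imp_subgroup subgroup.one_closed by blast
    then show "FC_succ G x \<subseteq> {\<one>\<^bsub>G\<^esub>}" using x(2) by blast
  qed
next
  case (succ y)
  show ?case
  proof (intro ballI impI)
    fix x assume x: "x \<in> Tn G" "x \<subset> FC_succ G y"
    have "x \<subseteq> y \<or> FC_succ G y \<subseteq> x" using Tn_Z1[OF G succ.hyps succ.IH x(1)] .
    then have "x \<subseteq> y" using x(2) by blast
    show "FC_succ G x \<subseteq> FC_succ G y"
    proof (cases "x = y")
      case True then show ?thesis by simp
    next
      case False
      then have "FC_succ G x \<subseteq> y" using succ.IH x(1) \<open>x \<subseteq> y\<close> by blast
      then show ?thesis using Tn_infl[OF G succ.hyps] by blast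
    qed
  qed
next
  case (lim SS)
  show ?case
  proof (intro ballI impI)
    fix x assume x: "x \<in> Tn G" "x \<subset> \<Union>SS"
    show "FC_succ G x \<subseteq> \<Union>SS"
    proof (cases "\<exists>s\<in>SS. x \<subset> s")
      case True
      then obtain s where s: "s \<in> SS" "x \<subset> s" by blast
      then have "FC_succ G x \<subseteq> s" using lim.IH x(1) by blast
      then show ?thesis using s by blast
    next
      case False
      have "\<forall>s\<in>SS. s \<subseteq> x"
      proof
        fix s assume s: "s \<in> SS"
        have "x \<subseteq> s \<or> FC_succ G s \<subseteq> x" using Tn_Z1[OF G lim.hyps(1)[OF s] lim.IH[OF s] x(1)] .
        then show "s \<subseteq> x" using False s Tn_infl[OF G lim.hyps(1)[OF s]] by blast
      qed
      then show ?thesis using x(2) by blast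
    qed
  qed
qed

lemma Tn_chain:
  assumes G: "group G" and "c \<in> Tn G" "x \<in> Tn G"
  shows "x \<subseteq> c \<or> c \<subseteq> x"
  using Tn_Z1[OF G assms(2) Tn_Z2[OF G assms(2)] assms(3)] Tn_infl[OF G assms(2)] by blast

lemma FC_terms_Tn:
  assumes G: "group G" and "N \<in> FC_terms G"
  shows "N \<in> Tn G"
  using assms(2)
proof (induction rule: FC_terms.induct)
  case base then show ?case by (rule Tn.base)
next
  case (succ N) then show ?case by (simp add: Tn.succ)
next
  case (lim SS)
  show ?case
  proof (rule Tn.lim)
    show "\<And>N. N \<in> SS \<Longrightarrow> N \<in> Tn G" by (rule lim.IH)
    show "SS \<noteq> {}" by (rule lim.hyps)
    show "\<forall>A\<in>SS. \<forall>B\<in>SS. A \<subseteq> B \<or> B \<subseteq> A"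
      using Tn_chain[OF G lim.IH lim.IH] by blast
  qed
qed

lemma FC_terms_normal: "group G \<Longrightarrow> N \<in> FC_terms G \<Longrightarrow> N \<lhd> G"
  using FC_terms_Tn Tn_normal by blast

lemma FCH_in_terms: "FCH G \<in> FC_terms G"
  unfolding FCH_def
  by (rule FC_terms.lim) (auto intro: FC_terms.base)



lemma conj_image_eq:
  assumes GK: "group_hom G K q" and surj: "q ` carrier G = carrier K" and g: "g \<in> carrier G"
  shows "(\<lambda>k. M #>\<^bsub>K\<^esub> (k \<otimes>\<^bsub>K\<^esub> q g \<otimes>\<^bsub>K\<^esub> inv\<^bsub>K\<^esub> k)) ` carrier K
       = (\<lambda>h. M #>\<^bsub>K\<^esub> q (h \<otimes>\<^bsub>G\<^esub> g \<otimes>\<^bsub>G\<^esub> inv\<^bsub>G\<^esub> h)) ` carrier G"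
proof -
  interpret group_hom G K q by (rule GK)
  have "(\<lambda>k. M #>\<^bsub>K\<^esub> (k \<otimes>\<^bsub>K\<^esub> q g \<otimes>\<^bsub>K\<^esub> inv\<^bsub>K\<^esub> k)) ` carrier K
     = (\<lambda>k. M #>\<^bsub>K\<^esub> (k \<otimes>\<^bsub>K\<^esub> q g \<otimes>\<^bsub>K\<^esub> inv\<^bsub>K\<^esub> k)) ` (q ` carrier G)"
    using surj by simp
  also have "\<dots> = (\<lambda>h. M #>\<^bsub>K\<^esub> q (h \<otimes>\<^bsub>G\<^esub> g \<otimes>\<^bsub>G\<^esub> inv\<^bsub>G\<^esub> h)) ` carrier G"
    unfolding image_image
  proof (rule image_cong[OF refl])
    fix h assume h: "h \<in> carrier G"
    show "M #>\<^bsub>K\<^esub> (q h \<otimes>\<^bsub>K\<^esub> q g \<otimes>\<^bsub>K\<^esub> inv\<^bsub>K\<^esub> q h) = M #>\<^bsub>K\<^esub> q (h \<otimes>\<^bsub>G\<^esub> g \<otimes>\<^bsub>G\<^esub> inv\<^bsub>G\<^esub> h)"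
      using h g by simp
  qed
  finally show ?thesis .
qed

lemma transfer_fwd:
  assumes GK: "group_hom G K q" and surj: "q ` carrier G = carrier K"
    and N: "N \<lhd> G" and M: "M \<lhd> K" and NM: "q ` N \<subseteq> M"
    and g: "g \<in> FC_succ G N"
  shows "q g \<in> FC_succ K M"
proof -
  interpret group_hom G K q by (rule GK)
  have gc: "g \<in> carrier G" and fin: "finite ((\<lambda>h. N #>\<^bsub>G\<^esub> (h \<otimes>\<^bsub>G\<^esub> g \<otimes>\<^bsub>G\<^esub> inv\<^bsub>G\<^esub> h)) ` carrier G)"
    using normal.FC_succ_mem[OF N] g by auto
  have rel: "M #>\<^bsub>K\<^esub> q x = M #>\<^bsub>K\<^esub> q y"
    if x: "x \<in> carrier G" and y: "y \<in> carrier G" and e: "N #>\<^bsub>G\<^esub> x = N #>\<^bsub>G\<^esub> y" for x y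
  proof -
    have "x \<otimes>\<^bsub>G\<^esub> inv\<^bsub>G\<^esub> y \<in> N" using normal.rcos_eq_iff[OF N x y] e by simp
    then have "q (x \<otimes>\<^bsub>G\<^esub> inv\<^bsub>G\<^esub> y) \<in> M" using NM by blast
    then have "q x \<otimes>\<^bsub>K\<^esub> inv\<^bsub>K\<^esub> q y \<in> M" using x y by simp
    then show ?thesis using normal.rcos_eq_iff[OF M] x y by simp
  qed
  have "finite ((\<lambda>h. M #>\<^bsub>K\<^esub> q (h \<otimes>\<^bsub>G\<^esub> g \<otimes>\<^bsub>G\<^esub> inv\<^bsub>G\<^esub> h)) ` carrier G)"
  proof (rule finite_transfer[OF fin])
    fix x y assume x: "x \<in> carrier G" and y: "y \<in> carrier G"
      and e: "N #>\<^bsub>G\<^esub> (x \<otimes>\<^bsub>G\<^esub> g \<otimes>\<^bsub>G\<^esub> inv\<^bsub>G\<^esub> x) = N #>\<^bsub>G\<^esub> (y \<otimes>\<^bsub>G\<^esub> g \<otimes>\<^bsub>G\<^esub> inv\<^bsub>G\<^esub> y)"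
    show "M #>\<^bsub>K\<^esub> q (x \<otimes>\<^bsub>G\<^esub> g \<otimes>\<^bsub>G\<^esub> inv\<^bsub>G\<^esub> x) = M #>\<^bsub>K\<^esub> q (y \<otimes>\<^bsub>G\<^esub> g \<otimes>\<^bsub>G\<^esub> inv\<^bsub>G\<^esub> y)"
      by (rule rel[OF _ _ e]) (use x y gc in simp_all)
  qed
  then have "finite ((\<lambda>k. M #>\<^bsub>K\<^esub> (k \<otimes>\<^bsub>K\<^esub> q g \<otimes>\<^bsub>K\<^esub> inv\<^bsub>K\<^esub> k)) ` carrier K)"
    using conj_image_eq[OF GK surj gc] by simp
  moreover have "q g \<in> carrier K" using gc by simp
  ultimately show ?thesis using normal.FC_succ_mem[OF M] by simp
qed

lemma transfer_bwd:
  assumes GK: "group_hom G K q" and surj: "q ` carrier G = carrier K"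
    and F: "F \<lhd> G" and M: "M \<lhd> K" and MF: "\<And>x. x \<in> carrier G \<Longrightarrow> q x \<in> M \<Longrightarrow> x \<in> F"
    and gc: "g \<in> carrier G" and g: "q g \<in> FC_succ K M"
  shows "g \<in> FC_succ G F"
proof -
  interpret group_hom G K q by (rule GK)
  have fin: "finite ((\<lambda>k. M #>\<^bsub>K\<^esub> (k \<otimes>\<^bsub>K\<^esub> q g \<otimes>\<^bsub>K\<^esub> inv\<^bsub>K\<^esub> k)) ` carrier K)"
    using normal.FC_succ_mem[OF M] g by auto
  then have fin2: "finite ((\<lambda>h. M #>\<^bsub>K\<^esub> q (h \<otimes>\<^bsub>G\<^esub> g \<otimes>\<^bsub>G\<^esub> inv\<^bsub>G\<^esub> h)) ` carrier G)"
    using conj_image_eq[OF GK surj gc] by simp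
  have rel: "F #>\<^bsub>G\<^esub> x = F #>\<^bsub>G\<^esub> y"
    if x: "x \<in> carrier G" and y: "y \<in> carrier G" and e: "M #>\<^bsub>K\<^esub> q x = M #>\<^bsub>K\<^esub> q y" for x y
  proof -
    have "q x \<otimes>\<^bsub>K\<^esub> inv\<^bsub>K\<^esub> q y \<in> M" using normal.rcos_eq_iff[OF M] x y e by simp
    then have "q (x \<otimes>\<^bsub>G\<^esub> inv\<^bsub>G\<^esub> y) \<in> M" using x y by simp
    then have "x \<otimes>\<^bsub>G\<^esub> inv\<^bsub>G\<^esub> y \<in> F" using MF x y by simp
    then show ?thesis using normal.rcos_eq_iff[OF F x y] by simp
  qed
  have "finite ((\<lambda>h. F #>\<^bsub>G\<^esub> (h \<otimes>\<^bsub>G\<^esub> g \<otimes>\<^bsub>G\<^esub> inv\<^bsub>G\<^esub> h)) ` carrier G)"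
    using fin2 by (rule finite_transfer) (use rel gc in simp)
  then show ?thesis using normal.FC_succ_mem[OF F] gc by simp
qed



lemma fwd_terms:
  assumes GK: "group_hom G K q" and surj: "q ` carrier G = carrier K"
    and N: "N \<in> FC_terms G"
  shows "\<exists>M\<in>FC_terms K. q ` N \<subseteq> M"
  using N
proof (induction rule: FC_terms.induct)
  case base
  interpret group_hom G K q by (rule GK)
  have "q ` {\<one>\<^bsub>G\<^esub>} \<subseteq> {\<one>\<^bsub>K\<^esub>}" by simp
  then show ?case using FC_terms.base by blast
next
  case (succ N)
  then obtain M where M: "M \<in> FC_terms K" "q ` N \<subseteq> M" by blast
  have Gg: "group G" "group K" using GK unfolding group_hom_def by auto
  have "q ` FC_succ G N \<subseteq> FC_succ K M"
    using transfer_fwd[OF GK surj FC_terms_normal[OF Gg(1) succ.hyps] FC_terms_normal[OF Gg(2) M(1)] M(2)]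
    by blast
  then show ?case using FC_terms.succ[OF M(1)] by blast
next
  case (lim SS)
  then have "\<forall>N\<in>SS. \<exists>M. M \<in> FC_terms K \<and> q ` N \<subseteq> M" by blast
  then obtain f where f: "\<forall>N\<in>SS. f N \<in> FC_terms K \<and> q ` N \<subseteq> f N" by metis
  have "\<Union>(f ` SS) \<in> FC_terms K"
    by (rule FC_terms.lim) (use f lim.hyps in auto)
  moreover have "q ` \<Union>SS \<subseteq> \<Union>(f ` SS)" using f by blast
  ultimately show ?case by blast
qed

lemma bwd_terms:
  assumes GK: "group_hom G K q" and surj: "q ` carrier G = carrier K"
    and ker: "kernel G K q \<subseteq> FCH G"
    and M: "M \<in> FC_terms K"
  shows "\<forall>x\<in>carrier G. q x \<in> M \<longrightarrow> x \<in> FCH G"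
  using M
proof (induction rule: FC_terms.induct)
  case base
  then show ?case using ker unfolding kernel_def by auto
next
  case (succ M)
  have Gg: "group G" "group K" using GK unfolding group_hom_def by auto
  have F: "FCH G \<lhd> G" using FC_terms_normal[OF Gg(1) FCH_in_terms] .
  have sub: "FC_succ G (FCH G) \<subseteq> FCH G"
    using FC_terms.succ[OF FCH_in_terms[of G]] unfolding FCH_def by blast
  show ?case
  proof (intro ballI impI)
    fix x assume x: "x \<in> carrier G" "q x \<in> FC_succ K M"
    have "x \<in> FC_succ G (FCH G)"
      by (rule transfer_bwd[OF GK surj F FC_terms_normal[OF Gg(2) succ.hyps] _ x]) (use succ.IH in blast)
    then show "x \<in> FCH G" using sub by blast
  qed
next
  case (lim SS)
  then show ?case by blast
qed

theorem proposition2p7: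
  fixes G :: "('a, 'b) monoid_scheme" and K :: "('c, 'd) monoid_scheme"
    and q :: "'a \<Rightarrow> 'c" and H :: "'a set"
  assumes "group G" and "group K"
    and "q \<in> hom G K" and "q ` carrier G = carrier K"
    and "kernel G K q = H"
    and "H \<subseteq> FCH G"
  shows "FC_hypercentral G \<longleftrightarrow> FC_hypercentral K"
proof -
  have GK: "group_hom G K q" unfolding group_hom_def group_hom_axioms_def using assms by simp
  have subG: "FCH G \<subseteq> carrier G" using FC_terms_normal[OF assms(1) FCH_in_terms]
    normal_imp_subgroup subgroup.subset by blast
  have subK: "FCH K \<subseteq> carrier K" using FC_terms_normal[OF assms(2) FCH_in_terms]
    normal_imp_subgroup subgroup.subset by blast
  show ?thesis
  proof
    assume h: "FC_hypercentral G"
    obtain M where M: "M \<in> FC_terms K" "q ` FCH G \<subseteq> M"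
      using fwd_terms[OF GK assms(4) FCH_in_terms] by blast
    have "M \<subseteq> FCH K" using M(1) unfolding FCH_def by blast
    then have "carrier K \<subseteq> FCH K" using M(2) h assms(4) unfolding FC_hypercentral_def by simp
    then show "FC_hypercentral K" using subK unfolding FC_hypercentral_def by blast
  next
    assume h: "FC_hypercentral K"
    have b: "\<forall>x\<in>carrier G. q x \<in> FCH K \<longrightarrow> x \<in> FCH G"
      using bwd_terms[OF GK assms(4) _ FCH_in_terms] assms(5,6) by blast
    have "carrier G \<subseteq> FCH G"
    proof
      fix x assume x: "x \<in> carrier G"
      then have "q x \<in> carrier K" using assms(4) by blast
      then show "x \<in> FCH G" using b x h unfolding FC_hypercentral_def by blast
    qed
    then show "FC_hypercentral G" using subG unfolding FC_hypercentral_def by blast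
  qed
qed


end
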